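(* Let $G=G_{\pm}(x)=3+2\{\cos(2\pi x)\pm\cos(12\pi x)\pm\cos(14\pi x)\}$ on $\mathbb{T}=\mathbb{R}/\mathbb{Z}$ (either sign), and let $Z$ be the set of local maximum points of $G$ in $\mathbb{T}$. Then for every $t>0$, $$\operatorname{Var}(G^t)<2\sum_{\zeta\in Z}G^t(\zeta),$$ where $\operatorname{Var}$ denotes total variation over one period $\mathbb{T}$. In particular $\operatorname{Var}(G_{\pm})<74$.
   Context: $\operatorname{Var}(\psi)=\operatorname{Var}(\psi,\mathbb{T})$ is the total variation of the $1$-periodic function $\psi$ over one period. *)

theory Defs
  imports "HOL-Analysis.Analysis"
begin

definition total_variation :: "(real \<Rightarrow> real) \<Rightarrow> real \<Rightarrow> real \<Rightarrow> real" where
  "total_variation f a b =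
     Sup {(\<Sum>i<n. \<bar>f (x (Suc i)) - f (x i)\<bar>) | n x.
            x 0 = a \<and> x n = b \<and> (\<forall>i<n. x i \<le> x (Suc i))}"

definition period_variation :: "(real \<Rightarrow> real) \<Rightarrow> real" where
  "period_variation f = total_variation f 0 1"

definition Gpm :: "real \<Rightarrow> real \<Rightarrow> real" where
  "Gpm s x = 3 + 2 * (cos (2*pi*x) + s * cos (12*pi*x) + s * cos (14*pi*x))"

definition local_max_point :: "(real \<Rightarrow> real) \<Rightarrow> real \<Rightarrow> bool" where
  "local_max_point f x \<longleftrightarrow> (\<exists>e>0. \<forall>y. \<bar>y - x\<bar> < e \<longrightarrow> f y \<le> f x)"

end

theory Submission
  imports Defs "HOL-Computational_Algebra.Polynomial"
begin



definition Pf :: "real \<Rightarrow> real \<Rightarrow> real" where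
  "Pf s c = 3 + 2*(c + s*(32*c^6 - 48*c^4 + 18*c^2 - 1) + s*(64*c^7 - 112*c^5 + 56*c^3 - 7*c))"
definition Df :: "real \<Rightarrow> real \<Rightarrow> real" where
  "Df s c = 2 + 2 * (s * (448*c^6 + 192*c^5 - 560*c^4 - 192*c^3 + 168*c^2 + 36*c - 7))"

lemma cos_rec: "cos ((y::real) + a) = 2 * cos a * cos y - cos (y - a)"
  by (simp add: cos_add cos_diff)

lemma cos_step: "cos (((n::real)+1)*a) = 2*cos a*cos(n*a) - cos((n-1)*a)"
  using cos_rec[of "n*a" a] by (simp add: algebra_simps)

lemma cos67: "cos (6*(a::real)) = 32*cos a^6 - 48*cos a^4 + 18*cos a^2 - 1 \<and>
   cos (7*a) = 64*cos a^7 - 112*cos a^5 + 56*cos a^3 - 7*cos a"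
proof -
  define c where "c = cos a"
  have 2: "cos (2*a) = 2*c^2 - 1" by (simp add: c_def cos_double_cos)
  have r3: "cos (3*a) = 2*c*cos(2*a) - c" using cos_step[of 2 a] by (simp add: c_def)
  have 3: "cos (3*a) = 4*c^3 - 3*c" unfolding r3 2 by (simp add: algebra_simps eval_nat_numeral)
  have r4: "cos (4*a) = 2*c*cos(3*a) - cos(2*a)" using cos_step[of 3 a] by (simp add: c_def)
  have 4: "cos (4*a) = 8*c^4 - 8*c^2 + 1" unfolding r4 3 2 by (simp add: algebra_simps eval_nat_numeral)
  have r5: "cos (5*a) = 2*c*cos(4*a) - cos(3*a)" using cos_step[of 4 a] by (simp add: c_def)
  have 5: "cos (5*a) = 16*c^5 - 20*c^3 + 5*c" unfolding r5 4 3 by (simp add: algebra_simps eval_nat_numeral)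
  have r6: "cos (6*a) = 2*c*cos(5*a) - cos(4*a)" using cos_step[of 5 a] by (simp add: c_def)
  have 6: "cos (6*a) = 32*c^6 - 48*c^4 + 18*c^2 - 1" unfolding r6 5 4 by (simp add: algebra_simps eval_nat_numeral)
  have r7: "cos (7*a) = 2*c*cos(6*a) - cos(5*a)" using cos_step[of 6 a] by (simp add: c_def)
  have 7: "cos (7*a) = 64*c^7 - 112*c^5 + 56*c^3 - 7*c" unfolding r7 6 5 by (simp add: algebra_simps eval_nat_numeral)
  show ?thesis using 6 7 by (simp add: c_def)
qed

lemma G_P: "Gpm s x = Pf s (cos (2*pi*x))"
proof -
  have "cos(12*pi*x) = cos(6*(2*pi*x))" "cos(14*pi*x) = cos(7*(2*pi*x))"
    by (simp_all add: algebra_simps)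
  then show ?thesis unfolding Gpm_def Pf_def using cos67[of "2*pi*x"] by simp
qed

lemma G_nonneg: assumes "s = 1 \<or> s = -1" shows "Gpm s x \<ge> 0"
proof -
  define a where "a = 2*pi*x"
  define b where "b = 7*a"
  have h1: "12*pi*x = b - a" unfolding a_def b_def by algebra
  have h2: "14*pi*x = b" unfolding a_def b_def by algebra
  have e: "cos (12*pi*x) = cos b * cos a + sin b * sin a" "cos (14*pi*x) = cos b"
    unfolding h1 h2 cos_diff by simp_all
  have ss: "s * s = 1" using assms by auto
  have sa: "sin a * sin a + cos a * cos a = 1" "sin b * sin b + cos b * cos b = 1"
    by (simp_all add: sin_squared_eq power2_eq_square[symmetric])
  have "Gpm s x = (1 + cos a + s * cos b)^2 + (sin a + s * sin b)^2"
  proof -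
    have "(1 + cos a + s * cos b)^2 + (sin a + s * sin b)^2 =
      1 + (sin a * sin a + cos a * cos a) + (s * s) * (sin b * sin b + cos b * cos b) + 2 * cos a + 2 * s * cos b
      + 2 * s * (cos b * cos a + sin b * sin a)"
      unfolding power2_eq_square by algebra
    also have "\<dots> = Gpm s x" unfolding sa ss Gpm_def e by (simp add: a_def)
    finally show ?thesis by simp
  qed
  then show ?thesis by simp
qed

lemma P_deriv: "(Pf s has_real_derivative Df s c) (at c)"
  unfolding Pf_def Df_def
  by (auto intro!: derivative_eq_intros simp: algebra_simps eval_nat_numeral)

definition Dp :: "real \<Rightarrow> real poly" where
  "Dp s = [:2 - 14 * s, 72 * s, 336 * s, -384 * s, -1120 * s, 384 * s, 896 * s:]"
lemma poly_Dp: "poly (Dp s) c = Df s c"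
  by (simp add: Dp_def Df_def algebra_simps eval_nat_numeral)
lemma deg_Dp: "degree (Dp s) \<le> 6"
  unfolding Dp_def by (rule order.trans[OF degree_pCons_le], simp)+


definition mono_betw :: "(real \<Rightarrow> real) \<Rightarrow> real \<Rightarrow> real \<Rightarrow> bool" where
  "mono_betw f lo hi \<longleftrightarrow> (\<forall>x y. lo \<le> x \<longrightarrow> x \<le> y \<longrightarrow> y \<le> hi \<longrightarrow> f x \<le> f y) \<or>
                         (\<forall>x y. lo \<le> x \<longrightarrow> x \<le> y \<longrightarrow> y \<le> hi \<longrightarrow> f y \<le> f x)"

lemma chain_le:
  fixes X :: "nat \<Rightarrow> real"
  assumes "\<forall>j<m. X j \<le> X (Suc j)" "i \<le> k" "k \<le> m"
  shows "X i \<le> X k"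
  using assms(2,3)
proof (induction k)
  case 0 then show ?case by simp
next
  case (Suc k)
  show ?case
  proof (cases "i = Suc k")
    case False
    then have "i \<le> k" using Suc.prems by simp
    then have "X i \<le> X k" using Suc by simp
    also have "X k \<le> X (Suc k)" using assms(1) Suc.prems by simp
    finally show ?thesis .
  qed simp
qed

lemma telescope_clamp:
  fixes X :: "nat \<Rightarrow> real" and f :: "real \<Rightarrow> real"
  assumes "\<forall>j<m. X j \<le> X (Suc j)" "X 0 \<le> y" "y \<le> X m"
  shows "f y - f (X 0) = (\<Sum>j<m. f (max (X j) (min y (X (Suc j)))) - f (X j))"
  using assms
proof (induction m arbitrary: y)
  case 0 then show ?case by simp
next
  case (Suc m)
  have ch: "\<forall>j<m. X j \<le> X (Suc j)" using Suc.prems by simp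
  show ?case
  proof (cases "y \<le> X m")
    case True
    have "X m \<le> X (Suc m)" using Suc.prems by simp
    then have "max (X m) (min y (X (Suc m))) = X m" using True by simp
    then show ?thesis using Suc.IH[OF ch Suc.prems(2) True] by simp
  next
    case False
    have X0m: "X 0 \<le> X m" using chain_le[OF ch, of 0 m] by simp
    have eq: "(\<Sum>j<m. f (max (X j) (min y (X (Suc j)))) - f (X j)) =
              (\<Sum>j<m. f (max (X j) (min (X m) (X (Suc j)))) - f (X j))"
    proof (rule sum.cong)
      fix j assume "j \<in> {..<m}"
      then have "X j \<le> X (Suc j)" "X (Suc j) \<le> X m" using ch chain_le[OF ch, of "Suc j" m] by auto
      then show "f (max (X j) (min y (X (Suc j)))) - f (X j) = f (max (X j) (min (X m) (X (Suc j)))) - f (X j)"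
        using False by simp
    qed simp
    have "max (X m) (min y (X (Suc m))) = y" using False Suc.prems by simp
    then show ?thesis using Suc.IH[OF ch X0m order_refl] eq by simp
  qed
qed

lemma var_bound:
  fixes f :: "real \<Rightarrow> real" and X :: "nat \<Rightarrow> real"
  assumes X0: "X 0 = a" and Xm: "X m = b" and Xmono: "\<forall>j<m. X j \<le> X (Suc j)"
    and mon: "\<forall>j<m. mono_betw f (X j) (X (Suc j))"
  shows "total_variation f a b \<le> (\<Sum>j<m. \<bar>f (X (Suc j)) - f (X j)\<bar>)"
proof -
  define cl where "cl j y = max (X j) (min y (X (Suc j)))" for j y
  define V where "V y = (\<Sum>j<m. \<bar>f (cl j y) - f (X j)\<bar>)" for y
  have ab: "a \<le> b" using chain_le[OF Xmono, of 0 m] X0 Xm by simp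
  have key: "\<bar>f v - f u\<bar> \<le> V v - V u" if uv: "a \<le> u" "u \<le> v" "v \<le> b" for u v
  proof -
    have "f v - f u = (f v - f a) - (f u - f a)" by simp
    also have "\<dots> = (\<Sum>j<m. f (cl j v) - f (cl j u))"
      using telescope_clamp[OF Xmono, of v f] telescope_clamp[OF Xmono, of u f] uv X0 Xm
      by (simp add: cl_def sum_subtractf)
    finally have "\<bar>f v - f u\<bar> \<le> (\<Sum>j<m. \<bar>f (cl j v) - f (cl j u)\<bar>)"
      by (simp add: sum_abs)
    also have "\<dots> = (\<Sum>j<m. \<bar>f (cl j v) - f (X j)\<bar> - \<bar>f (cl j u) - f (X j)\<bar>)"
    proof (rule sum.cong)
      fix j assume j: "j \<in> {..<m}"
      have r: "X j \<le> cl j u" "cl j u \<le> cl j v" "cl j v \<le> X (Suc j)" "X j \<le> X (Suc j)"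
        using j Xmono uv by (auto simp: cl_def)
      from mon j have "mono_betw f (X j) (X (Suc j))" by simp
      then show "\<bar>f (cl j v) - f (cl j u)\<bar> = \<bar>f (cl j v) - f (X j)\<bar> - \<bar>f (cl j u) - f (X j)\<bar>"
        unfolding mono_betw_def
      proof
        assume i: "\<forall>x y. X j \<le> x \<longrightarrow> x \<le> y \<longrightarrow> y \<le> X (Suc j) \<longrightarrow> f x \<le> f y"
        have "f (X j) \<le> f (cl j u)" "f (cl j u) \<le> f (cl j v)" using i r by auto
        then show ?thesis by simp
      next
        assume i: "\<forall>x y. X j \<le> x \<longrightarrow> x \<le> y \<longrightarrow> y \<le> X (Suc j) \<longrightarrow> f y \<le> f x"
        have "f (cl j u) \<le> f (X j)" "f (cl j v) \<le> f (cl j u)" using i r by auto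
        then show ?thesis by simp
      qed
    qed simp
    also have "\<dots> = V v - V u" by (simp add: V_def sum_subtractf)
    finally show ?thesis .
  qed
  have Va: "V a = 0"
  proof -
    have "cl j a = X j" if "j < m" for j
      using that chain_le[OF Xmono, of 0 j] chain_le[OF Xmono, of j "Suc j"] X0 by (simp add: cl_def)
    then show ?thesis by (simp add: V_def)
  qed
  have Vb: "V b = (\<Sum>j<m. \<bar>f (X (Suc j)) - f (X j)\<bar>)"
  proof -
    have "cl j b = X (Suc j)" if "j < m" for j
      using that chain_le[OF Xmono, of "Suc j" m] chain_le[OF Xmono, of j "Suc j"] Xm by (simp add: cl_def)
    then show ?thesis by (simp add: V_def)
  qed
  show ?thesis unfolding total_variation_def
  proof (rule cSup_least)
    let ?x = "\<lambda>i::nat. if i = 0 then a else b"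
    have "(\<Sum>i<1. \<bar>f (?x (Suc i)) - f (?x i)\<bar>) \<in> {(\<Sum>i<n. \<bar>f (x (Suc i)) - f (x i)\<bar>) | n x.
            x 0 = a \<and> x n = b \<and> (\<forall>i<n. x i \<le> x (Suc i))}"
      using ab by (intro CollectI exI[of _ "1::nat"] exI[of _ ?x]) auto
    then show "{(\<Sum>i<n. \<bar>f (x (Suc i)) - f (x i)\<bar>) | n x.
            x 0 = a \<and> x n = b \<and> (\<forall>i<n. x i \<le> x (Suc i))} \<noteq> {}" by blast
  next
    fix z assume "z \<in> {(\<Sum>i<n. \<bar>f (x (Suc i)) - f (x i)\<bar>) | n x.
            x 0 = a \<and> x n = b \<and> (\<forall>i<n. x i \<le> x (Suc i))}"
    then obtain n x where z: "z = (\<Sum>i<n. \<bar>f (x (Suc i)) - f (x i)\<bar>)" and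
      x0: "x 0 = a" and xn: "x n = b" and xm: "\<forall>i<n. x i \<le> x (Suc i)" by blast
    have "z \<le> (\<Sum>i<n. V (x (Suc i)) - V (x i))"
      unfolding z
    proof (rule sum_mono)
      fix i assume i: "i \<in> {..<n}"
      have "a \<le> x i" using chain_le[OF xm, of 0 i] i x0 by simp
      moreover have "x (Suc i) \<le> b" using chain_le[OF xm, of "Suc i" n] i xn by simp
      moreover have "x i \<le> x (Suc i)" using xm i by simp
      ultimately show "\<bar>f (x (Suc i)) - f (x i)\<bar> \<le> V (x (Suc i)) - V (x i)" by (intro key) auto
    qed
    also have "\<dots> = V (x n) - V (x 0)" by (rule sum_lessThan_telescope)
    also have "\<dots> = (\<Sum>j<m. \<bar>f (X (Suc j)) - f (X j)\<bar>)" using x0 xn Va Vb by simp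
    finally show "z \<le> (\<Sum>j<m. \<bar>f (X (Suc j)) - f (X j)\<bar>)" .
  qed
qed




lemma Df_cont: "isCont (Df s) x"
  unfolding Df_def by (intro continuous_intros)

lemma Pf_cont: "isCont (Pf s) x"
  unfolding Pf_def by (intro continuous_intros)

lemma ivt_root:
  fixes g :: "real \<Rightarrow> real"
  assumes cont: "\<forall>x. isCont g x" and uv: "u < v" and sg: "g u * g v < 0"
  shows "\<exists>r. u < r \<and> r < v \<and> g r = 0"
proof (cases "g u < 0")
  case True
  then have "g v > 0" using sg by (simp add: mult_less_0_iff)
  then obtain r where r: "u \<le> r" "r \<le> v" "g r = 0"
    using IVT[of g u 0 v] True uv cont by auto
  then have "r \<noteq> u" "r \<noteq> v" using True \<open>g v > 0\<close> by auto
  then have "u < r" "r < v" using r by (auto simp: order_le_neq_trans)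
  then show ?thesis using r by blast
next
  case False
  then have "g u > 0" "g v < 0" using sg by (auto simp add: mult_less_0_iff)
  then obtain r where r: "u \<le> r" "r \<le> v" "g r = 0"
    using IVT2[of g v 0 u] uv cont by auto
  then have "r \<noteq> u" "r \<noteq> v" using \<open>g u > 0\<close> \<open>g v < 0\<close> by auto
  then have "u < r" "r < v" using r by (auto simp: order_le_neq_trans)
  then show ?thesis using r by blast
qed

lemma sign_const:
  fixes g :: "real \<Rightarrow> real"
  assumes cont: "\<forall>x. isCont g x" and nz: "\<forall>c. u < c \<and> c < v \<longrightarrow> g c \<noteq> 0"
    and w: "u < w" "w < v" "g w > 0" and c: "u < c" "c < v"
  shows "g c > 0"
proof (rule ccontr)
  assume "\<not> g c > 0"
  then have gc: "g c < 0" using nz c by force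
  show False
  proof (cases "c < w")
    case True
    then obtain r where "c \<le> r" "r \<le> w" "g r = 0"
      using IVT[of g c 0 w] gc w cont by auto
    then show False using nz c w by force
  next
    case False
    then have "w \<le> c" by simp
    then obtain r where "w \<le> r" "r \<le> c" "g r = 0"
      using IVT2[of g c 0 w] gc w cont by auto
    then show False using nz c w by force
  qed
qed

lemma strict_chain:
  fixes q :: "nat \<Rightarrow> real"
  assumes "\<forall>k<m. q k < q (Suc k)" "i < j" "j \<le> m"
  shows "q i < q j"
  using assms(2,3)
proof (induction j)
  case 0 then show ?case by simp
next
  case (Suc j)
  show ?case
  proof (cases "i = j")
    case True then show ?thesis using assms(1) Suc.prems by simp
  next
    case False
    then have "q i < q j" using Suc by simp
    also have "q j < q (Suc j)" using assms(1) Suc.prems by simp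
    finally show ?thesis .
  qed
qed

lemma struct_gen:
  fixes s :: real and a b :: "nat \<Rightarrow> real"
  assumes s: "s = 1 \<or> s = -1"
    and H1: "\<forall>i. 1 \<le> i \<and> i \<le> 6 \<longrightarrow> a i < b i"
    and H2: "\<forall>i. 1 \<le> i \<and> i \<le> 5 \<longrightarrow> b i < a (Suc i)"
    and H3: "-1 < a 1" "b 6 < 1"
    and H4: "\<forall>i. 1 \<le> i \<and> i \<le> 6 \<longrightarrow> s * (-1)^(i-1) * Df s (a i) > 0 \<and> s * (-1)^i * Df s (b i) > 0"
  shows "\<exists>q. q 0 = -1 \<and> q 7 = 1 \<and> (\<forall>k<7. q k < q (Suc k))
         \<and> (\<forall>i. 1 \<le> i \<and> i \<le> 6 \<longrightarrow> a i < q i \<and> q i < b i)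
         \<and> (\<forall>c. Df s c = 0 \<longrightarrow> (\<exists>i. 1 \<le> i \<and> i \<le> 6 \<and> c = q i))
         \<and> (\<forall>k<7. \<forall>x y. q k \<le> x \<longrightarrow> x \<le> y \<longrightarrow> y \<le> q (Suc k) \<longrightarrow> s * (-1)^k * (Pf s y - Pf s x) \<ge> 0)"
proof -
  have ss: "s * s = 1" using s by auto
  have ex: "\<exists>r. a i < r \<and> r < b i \<and> Df s r = 0" if i: "1 \<le> i" "i \<le> 6" for i
  proof -
    have p: "(s * (-1)^(i-1) * Df s (a i)) * (s * (-1)^i * Df s (b i)) > 0" using H4 i by simp
    have "(-1::real)^i = - ((-1)^(i-1))" using i by (cases i) auto
    then have "(s * (-1)^(i-1) * Df s (a i)) * (s * (-1)^i * Df s (b i))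
        = - ((s * s) * ((-1)^(i-1) * (-1)^(i-1)) * (Df s (a i) * Df s (b i)))" by (simp add: algebra_simps)
    also have "(-1::real)^(i-1) * (-1)^(i-1) = 1" by (simp add: power_mult_distrib[symmetric])
    finally have "Df s (a i) * Df s (b i) < 0" using p ss by simp
    then show ?thesis using ivt_root[of "Df s" "a i" "b i"] Df_cont H1 i by auto
  qed
  then obtain r where r: "\<And>i. 1 \<le> i \<Longrightarrow> i \<le> 6 \<Longrightarrow> a i < r i \<and> r i < b i \<and> Df s (r i) = 0"
    by metis
  define q where "q k = (if k = 0 then -1 else if k = 7 then 1 else r k)" for k
  have q0: "q 0 = -1" and q7: "q 7 = 1" by (simp_all add: q_def)
  have qab: "\<forall>i. 1 \<le> i \<and> i \<le> 6 \<longrightarrow> a i < q i \<and> q i < b i" using r by (auto simp: q_def)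
  have qroot: "\<And>i. 1 \<le> i \<Longrightarrow> i \<le> 6 \<Longrightarrow> Df s (q i) = 0" using r by (auto simp: q_def)
  have qmono: "\<forall>k<7. q k < q (Suc k)"
  proof (intro allI impI)
    fix k :: nat assume k: "k < 7"
    consider "k = 0" | "1 \<le> k \<and> k \<le> 5" | "k = 6" using k by linarith
    then show "q k < q (Suc k)"
    proof cases
      case 1 then show ?thesis using H3 r[of 1] by (simp add: q_def)
    next
      case 2 then show ?thesis using H2 r[of k] r[of "Suc k"] by (auto simp add: q_def)
    next
      case 3 then show ?thesis using H3 r[of 6] by (simp add: q_def)
    qed
  qed
  have roots: "\<forall>c. Df s c = 0 \<longrightarrow> (\<exists>i. 1 \<le> i \<and> i \<le> 6 \<and> c = q i)"
  proof -
    have nz: "Dp s \<noteq> 0"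
    proof
      assume "Dp s = 0"
      then have "Df s (a 1) = 0" using poly_Dp[of s "a 1"] by simp
      then show False using H4 by auto
    qed
    let ?R = "{c. poly (Dp s) c = 0}"
    have fin: "finite ?R" using poly_roots_finite[OF nz] .
    have cR: "card ?R \<le> 6" using card_poly_roots_bound[OF nz] deg_Dp[of s] by linarith
    have sub: "q ` {1..6} \<subseteq> ?R" using qroot by (auto simp: poly_Dp)
    have inj: "inj_on q {1..6}"
    proof (rule inj_onI)
      fix i j assume ij: "i \<in> {1..6::nat}" "j \<in> {1..6}" "q i = q j"
      show "i = j"
      proof (rule ccontr)
        assume "i \<noteq> j"
        then have "i < j \<or> j < i" by linarith
        then show False using strict_chain[OF qmono, of i j] strict_chain[OF qmono, of j i] ij by auto
      qed
    qed
    have "card (q ` {1..6}) = 6" using card_image[OF inj] by simp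
    then have "q ` {1..6} = ?R" using card_subset_eq[OF fin sub] cR
      by (metis card_mono fin le_antisym sub)
    then have eqR: "q ` {1..6} = {c. Df s c = 0}" by (simp add: poly_Dp)
    show ?thesis
    proof (intro allI impI)
      fix c assume "Df s c = 0"
      then have "c \<in> q ` {1..6}" using eqR by simp
      then show "\<exists>i. 1 \<le> i \<and> i \<le> 6 \<and> c = q i" by auto
    qed
  qed
  have mon: "\<forall>k<7. \<forall>x y. q k \<le> x \<longrightarrow> x \<le> y \<longrightarrow> y \<le> q (Suc k) \<longrightarrow> s * (-1)^k * (Pf s y - Pf s x) \<ge> 0"
  proof (intro allI impI)
    fix k :: nat and x y assume k: "k < 7" and xy: "q k \<le> x" "x \<le> y" "y \<le> q (Suc k)"
    define sg where "sg = s * (-1)^k"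
    have sg0: "sg \<noteq> 0" using s by (auto simp: sg_def)
    define w where "w = (if k = 0 then a 1 else b k)"
    have w: "q k < w \<and> w < q (Suc k) \<and> sg * Df s w > 0"
    proof -
      consider "k = 0" | "1 \<le> k \<and> k \<le> 5" | "k = 6" using k by linarith
      then show ?thesis
      proof cases
        case 1 then show ?thesis
          using H3 H4 qab by (auto simp: q_def w_def sg_def)
      next
        case 2 then show ?thesis
          using H2 H4 qab[rule_format, of k] qab[rule_format, of "Suc k"]
          by (auto simp: w_def sg_def)
      next
        case 3 then show ?thesis
          using H3 H4 qab by (auto simp: q_def w_def sg_def)
      qed
    qed
    have nzr: "\<forall>c. q k < c \<and> c < q (Suc k) \<longrightarrow> sg * Df s c \<noteq> 0"
    proof (intro allI impI)
      fix c assume c: "q k < c \<and> c < q (Suc k)"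
      show "sg * Df s c \<noteq> 0"
      proof
        assume "sg * Df s c = 0"
        then have "Df s c = 0" using sg0 by simp
        then obtain i where i: "1 \<le> i" "i \<le> 6" "c = q i" using roots by blast
        show False
        proof (cases "i \<le> k")
          case True
          then have "q i \<le> q k" using strict_chain[OF qmono, of i k] k by (cases "i = k") auto
          then show False using c i by simp
        next
          case False
          then have "q (Suc k) \<le> q i" using strict_chain[OF qmono, of "Suc k" i] i
            by (cases "i = Suc k") auto
          then show False using c i by simp
        qed
      qed
    qed
    have pos: "sg * Df s c \<ge> 0" if "q k < c" "c < q (Suc k)" for c
      using sign_const[of "\<lambda>c. sg * Df s c" "q k" "q (Suc k)" w c] nzr w that Df_cont
      by (auto intro: continuous_intros)
    have "sg * Pf s x \<le> sg * Pf s y"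
    proof (rule DERIV_nonneg_imp_increasing_open[of x y "\<lambda>c. sg * Pf s c"])
      show "x \<le> y" by fact
      fix c assume "x < c" "c < y"
      then show "\<exists>d. ((\<lambda>c. sg * Pf s c) has_real_derivative d) (at c) \<and> 0 \<le> d"
        using pos xy P_deriv[of s c] by (intro exI[of _ "sg * Df s c"]) (auto intro: DERIV_cmult)
    next
      show "continuous_on {x..y} (\<lambda>c. sg * Pf s c)"
        using Pf_cont by (intro continuous_at_imp_continuous_on) (auto intro: continuous_intros)
    qed
    then show "s * (-1)^k * (Pf s y - Pf s x) \<ge> 0" by (simp add: sg_def algebra_simps)
  qed
  show ?thesis using q0 q7 qmono qab roots mon by blast
qed




definition psi :: "real \<Rightarrow> real" where "psi c = arccos c / (2*pi)"

lemma psi_cos: "-1 \<le> c \<Longrightarrow> c \<le> 1 \<Longrightarrow> cos (2*pi*psi c) = c"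
  by (simp add: psi_def)

lemma cos_refl: "cos (2*pi*(1 - x)) = cos (2*pi*x)"
  by (simp add: right_diff_distrib cos_diff)

lemma psi_range: "-1 \<le> c \<Longrightarrow> c \<le> 1 \<Longrightarrow> 0 \<le> psi c \<and> psi c \<le> 1/2"
  using arccos_bounded[of c] by (simp add: psi_def field_simps)

lemma psi_1: "psi 1 = 0" and psi_m1: "psi (-1) = 1/2"
  by (simp_all add: psi_def)

lemma psi_less: "-1 \<le> c \<Longrightarrow> c < c' \<Longrightarrow> c' \<le> 1 \<Longrightarrow> psi c' < psi c"
  using arccos_less_mono[of c' c] by (simp add: psi_def divide_strict_right_mono)

lemma psi_of_cos: "0 \<le> x \<Longrightarrow> x \<le> 1/2 \<Longrightarrow> psi (cos (2*pi*x)) = x"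
  by (simp add: psi_def arccos_cos)

lemma cos_piece1:
  assumes "-1 \<le> u" "u \<le> v" "v \<le> 1" "psi v \<le> x" "x \<le> y" "y \<le> psi u"
  shows "u \<le> cos (2*pi*y) \<and> cos (2*pi*y) \<le> cos (2*pi*x) \<and> cos (2*pi*x) \<le> v"
proof -
  have pv: "0 \<le> psi v" using psi_range[of v] assms by simp
  have pu: "psi u \<le> 1/2" using psi_range[of u] assms by simp
  have pu0: "0 \<le> psi u" using psi_range[of u] assms by simp
  have pv1: "psi v \<le> 1/2" using psi_range[of v] assms by simp
  have ab: "0 \<le> 2*pi*z \<and> 2*pi*z \<le> pi" if "0 \<le> z" "z \<le> 1/2" for z
    using that pi_gt_zero by (auto simp: mult_le_cancel_left1)
  have r: "2*pi*x \<le> 2*pi*y" "2*pi*y \<le> 2*pi*psi u" "2*pi*psi v \<le> 2*pi*x"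
    using assms by auto
  note r = r ab[of x] ab[of y] ab[of "psi u"] ab[of "psi v"] assms pv pu pu0 pv1
  have "cos (2*pi*psi u) \<le> cos (2*pi*y)" using r by (subst cos_mono_le_eq) auto
  moreover have "cos (2*pi*y) \<le> cos (2*pi*x)" using r by (subst cos_mono_le_eq) auto
  moreover have "cos (2*pi*x) \<le> cos (2*pi*psi v)" using r pv by (subst cos_mono_le_eq) auto
  ultimately show ?thesis using psi_cos[of u] psi_cos[of v] assms by simp
qed

lemma cos_piece2:
  assumes "-1 \<le> u" "u \<le> v" "v \<le> 1" "1 - psi u \<le> x" "x \<le> y" "y \<le> 1 - psi v"
  shows "u \<le> cos (2*pi*x) \<and> cos (2*pi*x) \<le> cos (2*pi*y) \<and> cos (2*pi*y) \<le> v"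
  using cos_piece1[of u v "1 - y" "1 - x"] assms cos_refl[of x] cos_refl[of y] by auto

lemma f_piece:
  fixes s t u v \<sigma> :: real
  assumes G: "\<forall>x. Gpm s x \<ge> 0" and t: "t \<ge> 0" and uv: "-1 \<le> u" "u \<le> v" "v \<le> 1"
    and sg: "\<sigma> > 0 \<or> \<sigma> < 0"
    and mon: "\<forall>x y. u \<le> x \<longrightarrow> x \<le> y \<longrightarrow> y \<le> v \<longrightarrow> \<sigma> * (Pf s y - Pf s x) \<ge> 0"
  shows "mono_betw (\<lambda>x. Gpm s x powr t) (psi v) (psi u) \<and>
         mono_betw (\<lambda>x. Gpm s x powr t) (1 - psi u) (1 - psi v)"
proof -
  have pw: "Gpm s x \<le> Gpm s y \<Longrightarrow> Gpm s x powr t \<le> Gpm s y powr t" for x y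
    using G t by (intro powr_mono2) auto
  show ?thesis
  proof (cases "\<sigma> > 0")
    case True
    then have inc: "\<And>x y. u \<le> x \<Longrightarrow> x \<le> y \<Longrightarrow> y \<le> v \<Longrightarrow> Pf s x \<le> Pf s y"
      using mon by (auto simp: zero_le_mult_iff)
    have 1: "mono_betw (\<lambda>x. Gpm s x powr t) (psi v) (psi u)"
      unfolding mono_betw_def
    proof (intro disjI2 allI impI)
      fix x y assume "psi v \<le> x" "x \<le> y" "y \<le> psi u"
      then have "Gpm s y \<le> Gpm s x" using cos_piece1[of u v x y] uv inc by (simp add: G_P)
      then show "Gpm s y powr t \<le> Gpm s x powr t" by (rule pw)
    qed
    have 2: "mono_betw (\<lambda>x. Gpm s x powr t) (1 - psi u) (1 - psi v)"
      unfolding mono_betw_def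
    proof (intro disjI1 allI impI)
      fix x y assume "1 - psi u \<le> x" "x \<le> y" "y \<le> 1 - psi v"
      then have "Gpm s x \<le> Gpm s y" using cos_piece2[of u v x y] uv inc by (simp add: G_P)
      then show "Gpm s x powr t \<le> Gpm s y powr t" by (rule pw)
    qed
    show ?thesis using 1 2 by simp
  next
    case False
    then have "\<sigma> < 0" using sg by simp
    then have dec: "\<And>x y. u \<le> x \<Longrightarrow> x \<le> y \<Longrightarrow> y \<le> v \<Longrightarrow> Pf s y \<le> Pf s x"
      using mon by (auto simp: zero_le_mult_iff)
    have 1: "mono_betw (\<lambda>x. Gpm s x powr t) (psi v) (psi u)"
      unfolding mono_betw_def
    proof (intro disjI1 allI impI)
      fix x y assume "psi v \<le> x" "x \<le> y" "y \<le> psi u"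
      then have "Gpm s x \<le> Gpm s y" using cos_piece1[of u v x y] uv dec by (simp add: G_P)
      then show "Gpm s x powr t \<le> Gpm s y powr t" by (rule pw)
    qed
    have 2: "mono_betw (\<lambda>x. Gpm s x powr t) (1 - psi u) (1 - psi v)"
      unfolding mono_betw_def
    proof (intro disjI2 allI impI)
      fix x y assume "1 - psi u \<le> x" "x \<le> y" "y \<le> 1 - psi v"
      then have "Gpm s y \<le> Gpm s x" using cos_piece2[of u v x y] uv dec by (simp add: G_P)
      then show "Gpm s y powr t \<le> Gpm s x powr t" by (rule pw)
    qed
    show ?thesis using 1 2 by simp
  qed
qed

lemma lmax:
  assumes P: "\<forall>c. \<alpha> < c \<and> c < \<beta> \<and> -1 \<le> c \<and> c \<le> 1 \<longrightarrow> Pf s c \<le> Pf s (cos (2*pi*x0))"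
    and ab: "\<alpha> < cos (2*pi*x0)" "cos (2*pi*x0) < \<beta>"
  shows "local_max_point (Gpm s) x0"
proof -
  define c0 where "c0 = cos (2*pi*x0)"
  define e where "e = min (c0 - \<alpha>) (\<beta> - c0)"
  have e: "e > 0" using ab by (simp add: e_def c0_def)
  have "continuous (at x0) (\<lambda>y. cos (2*pi*y))" by (intro continuous_intros)
  then obtain d where d: "d > 0" "\<forall>y. dist y x0 < d \<longrightarrow> dist (cos (2*pi*y)) (cos (2*pi*x0)) < e"
    using e unfolding continuous_at_eps_delta by blast
  show ?thesis unfolding local_max_point_def
  proof (intro exI[of _ d] conjI allI impI)
    fix y assume y: "\<bar>y - x0\<bar> < d"
    then have "\<bar>cos (2*pi*y) - c0\<bar> < e" using d by (simp add: dist_real_def c0_def)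
    then have "\<alpha> < cos (2*pi*y)" "cos (2*pi*y) < \<beta>" by (auto simp: e_def)
    then have "Pf s (cos (2*pi*y)) \<le> Pf s c0" using P by (simp add: c0_def)
    then show "Gpm s y \<le> Gpm s x0" by (simp add: G_P c0_def)
  qed (rule d(1))
qed

lemma crit:
  assumes "local_max_point (Gpm s) x"
  shows "sin (2*pi*x) = 0 \<or> Df s (cos (2*pi*x)) = 0"
proof -
  have d1: "((\<lambda>x. cos (2*pi*x)) has_real_derivative (- sin (2*pi*x) * (2*pi))) (at x)"
    by (auto intro!: derivative_eq_intros)
  have "((\<lambda>x. Pf s (cos (2*pi*x))) has_real_derivative Df s (cos (2*pi*x)) * (- sin (2*pi*x) * (2*pi))) (at x)"
    by (rule DERIV_chain2[OF P_deriv d1])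
  moreover have "Gpm s = (\<lambda>x. Pf s (cos (2*pi*x)))" by (rule ext) (simp add: G_P)
  ultimately have D: "(Gpm s has_real_derivative Df s (cos (2*pi*x)) * (- sin (2*pi*x) * (2*pi))) (at x)"
    by simp
  obtain e where e: "e > 0" "\<forall>y. \<bar>y - x\<bar> < e \<longrightarrow> Gpm s y \<le> Gpm s x"
    using assms unfolding local_max_point_def by blast
  have "Df s (cos (2*pi*x)) * (- sin (2*pi*x) * (2*pi)) = 0"
    using DERIV_local_max[OF D e(1)] e(2) by (simp add: abs_minus_commute)
  then show ?thesis by auto
qed

lemma Df_bound:
  assumes s: "s = 1 \<or> s = -1" and c: "-1 \<le> c" "c \<le> 1"
  shows "Df s c \<le> 3208"
proof -
  have b: "\<bar>c^n\<bar> \<le> 1" for n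
  proof -
    have "\<bar>c\<bar>^n \<le> 1" using c by (intro power_le_one) auto
    then show ?thesis by (simp add: power_abs)
  qed
  have "\<bar>448*c^6 + 192*c^5 - 560*c^4 - 192*c^3 + 168*c^2 + 36*c - 7\<bar> \<le> 1603"
  proof -
    have bb: "-1 \<le> c^n \<and> c^n \<le> 1" for n using b[of n] unfolding abs_le_iff by linarith
    show ?thesis unfolding abs_le_iff
      using bb[of 6] bb[of 5] bb[of 4] bb[of 3] bb[of 2] bb[of 1] by (intro conjI; simp only: power_one_right; linarith)
  qed
  then show ?thesis using s by (auto simp: Df_def abs_le_iff)
qed

lemma Pf_lip:
  assumes s: "s = 1 \<or> s = -1" and uv: "-1 \<le> u" "u \<le> v" "v \<le> 1"
  shows "Pf s v \<le> Pf s u + 3208 * (v - u)"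
proof -
  have "3208 * u - Pf s u \<le> 3208 * v - Pf s v"
  proof (rule DERIV_nonneg_imp_increasing_open[of u v])
    show "u \<le> v" by fact
    fix c assume "u < c" "c < v"
    then show "\<exists>y. ((\<lambda>c. 3208 * c - Pf s c) has_real_derivative y) (at c) \<and> 0 \<le> y"
      using Df_bound[OF s, of c] uv P_deriv[of s c]
      by (intro exI[of _ "3208 - Df s c"]) (auto intro!: derivative_eq_intros)
  next
    show "continuous_on {u..v} (\<lambda>c. 3208 * c - Pf s c)"
      using Pf_cont by (intro continuous_at_imp_continuous_on) (auto intro: continuous_intros)
  qed
  then show ?thesis by simp
qed




definition Xp :: "(nat \<Rightarrow> real) \<Rightarrow> nat \<Rightarrow> real" where
  "Xp q k = (if k \<le> 7 then psi (q (7 - k)) else 1 - psi (q (k - 7)))"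

context
  fixes s :: real and q :: "nat \<Rightarrow> real"
  assumes s: "s = 1 \<or> s = -1"
    and q0: "q 0 = -1" and q7: "q 7 = 1" and qmono: "\<forall>k<7. q k < q (Suc k)"
    and qroots: "\<forall>c. Df s c = 0 \<longrightarrow> (\<exists>i. 1 \<le> i \<and> i \<le> 6 \<and> c = q i)"
    and qmon: "\<forall>k<7. \<forall>x y. q k \<le> x \<longrightarrow> x \<le> y \<longrightarrow> y \<le> q (Suc k) \<longrightarrow> s * (-1)^k * (Pf s y - Pf s x) \<ge> 0"
begin

lemma q_le: "i \<le> j \<Longrightarrow> j \<le> 7 \<Longrightarrow> q i \<le> q j"
  using strict_chain[OF qmono, of i j] by (cases "i = j") auto

lemma q_range: "k \<le> 7 \<Longrightarrow> -1 \<le> q k \<and> q k \<le> 1"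
  using q_le[of 0 k] q_le[of k 7] q0 q7 by simp

lemma Xp_hi: "7 \<le> k \<Longrightarrow> Xp q k = 1 - psi (q (k - 7))"
  by (cases "k = 7") (auto simp: Xp_def q0 psi_m1)

lemma Xp_cos: "k \<le> 14 \<Longrightarrow> cos (2*pi*Xp q k) = q (if k \<le> 7 then 7 - k else k - 7)"
proof (cases "k \<le> 7")
  case True
  then show "k \<le> 14 \<Longrightarrow> ?thesis" using psi_cos q_range[of "7-k"] by (simp add: Xp_def)
next
  case False
  then show "k \<le> 14 \<Longrightarrow> ?thesis" using psi_cos q_range[of "k-7"] Xp_hi[of k] cos_refl[of "psi (q (k-7))"]
    by simp
qed

lemma Xp_G: "k \<le> 14 \<Longrightarrow> Gpm s (Xp q k) = Pf s (q (if k \<le> 7 then 7 - k else k - 7))"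
  using Xp_cos[of k] by (simp add: G_P)

lemma Xp_mono: "k < 14 \<Longrightarrow> Xp q k < Xp q (Suc k)"
proof (cases "k < 7")
  case True
  have e: "Suc (6-k) = 7-k" using True by simp
  have "q (6-k) < q (Suc (6-k))" using qmono True by simp
  then have "q (6-k) < q (7-k)" using e by simp
  then have "psi (q (7 - k)) < psi (q (6 - k))"
    using psi_less[of "q (6-k)" "q (7-k)"] q_range[of "6-k"] q_range[of "7-k"] by simp
  then show ?thesis using True by (simp add: Xp_def)
next
  case False
  assume "k < 14"
  then have e: "Suc (k-7) = k-6" using False by simp
  have "q (k-7) < q (Suc (k-7))" using qmono False \<open>k < 14\<close> by simp
  then have "q (k-7) < q (k-6)" using e by simp
  then have "psi (q (k - 6)) < psi (q (k - 7))"
    using psi_less[of "q (k-7)" "q (k-6)"] q_range[of "k-6"] q_range[of "k-7"] False \<open>k < 14\<close> by simp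
  then show ?thesis using False Xp_hi[of k] Xp_hi[of "Suc k"] by simp
qed

lemma Xp0: "Xp q 0 = 0" and Xp14: "Xp q 14 = 1"
  by (simp_all add: Xp_def q7 psi_1)

lemma var_le:
  assumes t: "t \<ge> 0"
  shows "period_variation (\<lambda>x. Gpm s x powr t)
         \<le> (\<Sum>j<14. \<bar>Gpm s (Xp q (Suc j)) powr t - Gpm s (Xp q j) powr t\<bar>)"
  unfolding period_variation_def
proof (rule var_bound)
  show "Xp q 0 = 0" "Xp q 14 = 1" by (rule Xp0, rule Xp14)
  show "\<forall>j<14. Xp q j \<le> Xp q (Suc j)" using Xp_mono by (auto intro: less_imp_le)
  have G: "\<forall>x. Gpm s x \<ge> 0" using G_nonneg s by blast
  have sg: "\<And>k. s * (-1)^k > 0 \<or> s * (-1)^k < 0" using s by (auto simp: neg_one_even_power neg_one_odd_power)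
  show "\<forall>j<14. mono_betw (\<lambda>x. Gpm s x powr t) (Xp q j) (Xp q (Suc j))"
  proof (intro allI impI)
    fix j :: nat assume j: "j < 14"
    show "mono_betw (\<lambda>x. Gpm s x powr t) (Xp q j) (Xp q (Suc j))"
    proof (cases "j < 7")
      case True
      define k where "k = 6 - j"
      have k: "k < 7" "j = 6 - k" "Suc k = 7 - j" using True by (auto simp: k_def)
      have "q k < q (Suc k)" using qmono k by simp
      moreover have mk: "\<forall>x y. q k \<le> x \<longrightarrow> x \<le> y \<longrightarrow> y \<le> q (Suc k) \<longrightarrow> s * (-1)^k * (Pf s y - Pf s x) \<ge> 0"
        using qmon k(1) by blast
      moreover have "-1 \<le> q k" "q (Suc k) \<le> 1" using q_range[of k] q_range[of "Suc k"] k(1) by auto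
      ultimately have "mono_betw (\<lambda>x. Gpm s x powr t) (psi (q (Suc k))) (psi (q k))"
        using f_piece[OF G t, of "q k" "q (Suc k)" "s * (-1)^k", OF _ _ _ sg] by (meson less_imp_le)
      moreover have "Xp q j = psi (q (Suc k))" "Xp q (Suc j) = psi (q k)" using k True
        by (auto simp: Xp_def)
      ultimately show ?thesis by simp
    next
      case False
      define k where "k = j - 7"
      have k: "k < 7" "j = k + 7" using False j by (auto simp: k_def)
      have "q k < q (Suc k)" using qmono k by simp
      moreover have mk: "\<forall>x y. q k \<le> x \<longrightarrow> x \<le> y \<longrightarrow> y \<le> q (Suc k) \<longrightarrow> s * (-1)^k * (Pf s y - Pf s x) \<ge> 0"
        using qmon k(1) by blast
      moreover have "-1 \<le> q k" "q (Suc k) \<le> 1" using q_range[of k] q_range[of "Suc k"] k(1) by auto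
      ultimately have "mono_betw (\<lambda>x. Gpm s x powr t) (1 - psi (q k)) (1 - psi (q (Suc k)))"
        using f_piece[OF G t, of "q k" "q (Suc k)" "s * (-1)^k", OF _ _ _ sg] by (meson less_imp_le)
      moreover have "Xp q j = 1 - psi (q k)" "Xp q (Suc j) = 1 - psi (q (Suc k))"
        using Xp_hi[of j] Xp_hi[of "Suc j"] k by auto
      ultimately show ?thesis by simp
    qed
  qed
qed

lemma lmax_int:
  assumes k: "1 \<le> k" "k \<le> 6" and sg: "s * (-1)^(k-1) > 0"
  shows "local_max_point (Gpm s) (Xp q (7 - k)) \<and> local_max_point (Gpm s) (Xp q (7 + k))"
proof -
  have sk: "s * (-1)^k = - (s * (-1)^(k-1))" using k by (cases k) auto
  have P: "\<forall>c. q (k-1) < c \<and> c < q (k+1) \<and> -1 \<le> c \<and> c \<le> 1 \<longrightarrow> Pf s c \<le> Pf s (q k)"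
  proof (intro allI impI)
    fix c assume c: "q (k-1) < c \<and> c < q (k+1) \<and> -1 \<le> c \<and> c \<le> 1"
    show "Pf s c \<le> Pf s (q k)"
    proof (cases "c \<le> q k")
      case True
      have "s * (-1)^(k-1) * (Pf s (q k) - Pf s c) \<ge> 0"
        using qmon[rule_format, of "k-1" c "q k"] k c True by simp
      then show ?thesis using sg by (simp add: zero_le_mult_iff)
    next
      case False
      have "s * (-1)^k * (Pf s c - Pf s (q k)) \<ge> 0"
        using qmon[rule_format, of k "q k" c] k c False by simp
      then have "(s * (-1)^(k-1)) * (Pf s c - Pf s (q k)) \<le> 0" using sk by simp
      then have "Pf s c - Pf s (q k) \<le> 0"
        using sg mult_pos_pos[of "s * (-1)^(k-1)" "Pf s c - Pf s (q k)"] by linarith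
      then show ?thesis by simp
    qed
  qed
  have "k - 1 < 7" using k by simp
  then have "q (k-1) < q (Suc (k-1))" using qmono by blast
  moreover have "Suc (k-1) = k" using k by simp
  ultimately have ab1: "q (k-1) < q k" by simp
  have ab: "q (k-1) < q k" "q k < q (k+1)" using ab1 qmono k by auto
  have c1: "cos (2*pi*Xp q (7-k)) = q k" using Xp_cos[of "7-k"] k by simp
  have c2: "cos (2*pi*Xp q (7+k)) = q k" using Xp_cos[of "7+k"] k by simp
  show ?thesis
    using lmax[of "q (k-1)" "q (k+1)" s "Xp q (7-k)"] lmax[of "q (k-1)" "q (k+1)" s "Xp q (7+k)"]
      P ab c1 c2 by simp
qed

lemma lmax_0:
  assumes "s = 1"
  shows "local_max_point (Gpm s) (Xp q 0)"
proof -
  have P: "\<forall>c. q 6 < c \<and> c < 2 \<and> -1 \<le> c \<and> c \<le> 1 \<longrightarrow> Pf s c \<le> Pf s (q 7)"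
  proof (intro allI impI)
    fix c assume c: "q 6 < c \<and> c < 2 \<and> -1 \<le> c \<and> c \<le> 1"
    have "s * (-1)^6 * (Pf s (q 7) - Pf s c) \<ge> 0"
      using qmon[rule_format, of 6 c "q 7"] c q7 by (simp add: numeral_eq_Suc)
    then show "Pf s c \<le> Pf s (q 7)" using assms by simp
  qed
  have "cos (2*pi*Xp q 0) = q 7" using Xp_cos[of 0] by simp
  then show ?thesis using lmax[of "q 6" 2 s "Xp q 0"] P qmono q7 by (simp add: numeral_eq_Suc)
qed

lemma lmax_7:
  assumes "s = -1"
  shows "local_max_point (Gpm s) (Xp q 7)"
proof -
  have P: "\<forall>c. -2 < c \<and> c < q 1 \<and> -1 \<le> c \<and> c \<le> 1 \<longrightarrow> Pf s c \<le> Pf s (q 0)"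
  proof (intro allI impI)
    fix c assume c: "-2 < c \<and> c < q 1 \<and> -1 \<le> c \<and> c \<le> 1"
    have "s * (-1)^0 * (Pf s c - Pf s (q 0)) \<ge> 0"
      using qmon[rule_format, of 0 "q 0" c] c q0 by simp
    then show "Pf s c \<le> Pf s (q 0)" using assms by simp
  qed
  have "cos (2*pi*Xp q 7) = q 0" using Xp_cos[of 7] by simp
  moreover have "q 0 < q 1" using qmono by simp
  ultimately show ?thesis using lmax[of "-2" "q 1" s "Xp q 7"] P q0 by simp
qed

lemma Z_sub:
  assumes lm: "local_max_point (Gpm s) x" and x: "0 \<le> x" "x < 1"
  shows "x \<in> Xp q ` {..14}"
proof -
  have "\<exists>i\<le>7. cos (2*pi*x) = q i"
  proof (cases "sin (2*pi*x) = 0")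
    case True
    then have "cos (2*pi*x)^2 = 1" using sin_cos_squared_add[of "2*pi*x"] by simp
    then have "cos (2*pi*x) = 1 \<or> cos (2*pi*x) = -1" by (simp add: power2_eq_1_iff)
    then show ?thesis using q0 q7 by (metis le_refl zero_le)
  next
    case False
    then have "Df s (cos (2*pi*x)) = 0" using crit[OF lm] by simp
    then obtain i where "1 \<le> i" "i \<le> 6" "cos (2*pi*x) = q i" using qroots by blast
    then show ?thesis by (intro exI[of _ i]) simp
  qed
  then obtain i where i: "i \<le> 7" "cos (2*pi*x) = q i" by blast
  show ?thesis
  proof (cases "x \<le> 1/2")
    case True
    then have "x = psi (q i)" using psi_of_cos[of x] x i by simp
    then have "x = Xp q (7 - i)" using i by (simp add: Xp_def)
    then show ?thesis using i by auto
  next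
    case False
    then have "1 - x = psi (q i)" using psi_of_cos[of "1 - x"] x i cos_refl[of x] by simp
    then have "x = Xp q (7 + i)" using Xp_hi[of "7 + i"] by simp
    then show ?thesis using i by auto
  qed
qed

end



context
  fixes s :: real and q :: "nat \<Rightarrow> real"
  assumes s: "s = 1 \<or> s = -1"
    and q0: "q 0 = -1" and q7: "q 7 = 1" and qmono: "\<forall>k<7. q k < q (Suc k)"
    and qroots: "\<forall>c. Df s c = 0 \<longrightarrow> (\<exists>i. 1 \<le> i \<and> i \<le> 6 \<and> c = q i)"
    and qmon: "\<forall>k<7. \<forall>x y. q k \<le> x \<longrightarrow> x \<le> y \<longrightarrow> y \<le> q (Suc k) \<longrightarrow> s * (-1)^k * (Pf s y - Pf s x) \<ge> 0"
begin

lemmas L = s q0 q7 qmono qroots qmon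

lemma var_le2:
  assumes t: "t \<ge> 0"
  shows "period_variation (\<lambda>x. Gpm s x powr t)
         \<le> 2 * (\<Sum>k<7. \<bar>Pf s (q (Suc k)) powr t - Pf s (q k) powr t\<bar>)"
proof -
  have XG: "\<And>k. k \<le> 14 \<Longrightarrow> Gpm s (Xp q k) = Pf s (q (if k \<le> 7 then 7 - k else k - 7))"
    by (rule Xp_G[OF L])
  have "(\<Sum>j<14. \<bar>Gpm s (Xp q (Suc j)) powr t - Gpm s (Xp q j) powr t\<bar>)
      = 2 * (\<Sum>k<7. \<bar>Pf s (q (Suc k)) powr t - Pf s (q k) powr t\<bar>)"
    by (simp add: numeral_eq_Suc XG abs_minus_commute)
  then show ?thesis using var_le[OF L t] by simp
qed

lemma Xp_mono': "\<forall>k<14. Xp q k < Xp q (Suc k)" using Xp_mono[OF L] by blast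

lemma Xp_range: "j < 14 \<Longrightarrow> 0 \<le> Xp q j \<and> Xp q j < 1"
proof -
  assume j: "j < 14"
  have "Xp q 0 \<le> Xp q j" using strict_chain[OF Xp_mono', of 0 j] j by (cases "j = 0") auto
  moreover have "Xp q j < Xp q 14" using strict_chain[OF Xp_mono', of j 14] j by simp
  ultimately show ?thesis using Xp0[OF L] Xp14[OF L] by simp
qed

lemma Xp_inj: "inj_on (Xp q) {..14}"
proof (rule inj_onI)
  fix i j assume ij: "i \<in> {..14::nat}" "j \<in> {..14}" "Xp q i = Xp q j"
  show "i = j"
  proof (rule ccontr)
    assume "i \<noteq> j"
    then have "i < j \<or> j < i" by linarith
    then show False using strict_chain[OF Xp_mono', of i j] strict_chain[OF Xp_mono', of j i] ij by auto
  qed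
qed

lemma Pf_q_nonneg: "k \<le> 7 \<Longrightarrow> Pf s (q k) \<ge> 0"
  using G_nonneg[OF s, of "psi (q k)"] psi_cos q_range[OF L, of k] by (simp add: G_P)

lemma Z_fin: "finite {x \<in> {0..<1}. local_max_point (Gpm s) x}"
  by (rule finite_subset[of _ "Xp q ` {..14}"]) (auto intro: Z_sub[OF L])

lemma sumM:
  assumes M: "M \<subseteq> {..<14}" and lm: "\<forall>j\<in>M. local_max_point (Gpm s) (Xp q j)"
  shows "(\<Sum>j\<in>M. Gpm s (Xp q j) powr t) \<le> (\<Sum>\<zeta>\<in>{x \<in> {0..<1}. local_max_point (Gpm s) x}. Gpm s \<zeta> powr t)"
proof -
  have "M \<subseteq> {..14}" using M by auto
  then have inj: "inj_on (Xp q) M" using inj_on_subset[OF Xp_inj] by blast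
  have sub: "Xp q ` M \<subseteq> {x \<in> {0..<1}. local_max_point (Gpm s) x}"
    using M lm Xp_range by auto
  have "(\<Sum>j\<in>M. Gpm s (Xp q j) powr t) = (\<Sum>\<zeta>\<in>Xp q ` M. Gpm s \<zeta> powr t)"
    using sum.reindex[OF inj, of "\<lambda>x. Gpm s x powr t"] by simp
  also have "\<dots> \<le> (\<Sum>\<zeta>\<in>{x \<in> {0..<1}. local_max_point (Gpm s) x}. Gpm s \<zeta> powr t)"
    by (rule sum_mono2[OF Z_fin sub]) simp
  finally show ?thesis .
qed

lemma rel: "k < 7 \<Longrightarrow> s * (-1)^k * (Pf s (q (Suc k)) - Pf s (q k)) \<ge> 0"
  using qmon qmono by (meson less_imp_le order_refl)

end

lemma sumabs7: "(\<Sum>k<(7::nat). \<bar>p (Suc k) - p k\<bar>) = \<bar>p 1 - p 0\<bar> + \<bar>p 2 - p 1\<bar> + \<bar>p 3 - p 2\<bar>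
        + \<bar>p 4 - p 3\<bar> + \<bar>p 5 - p 4\<bar> + \<bar>p 6 - p 5\<bar> + \<bar>p 7 - (p 6 :: real)\<bar>"
  by (simp add: numeral_eq_Suc)

lemma sum7: "(\<Sum>k<(7::nat). g k) = g 0 + g 1 + g 2 + g 3 + g 4 + g 5 + (g 6 :: real)"
  by (simp add: numeral_eq_Suc)




lemma cases6: "1 \<le> (i::nat) \<Longrightarrow> i \<le> 6 \<Longrightarrow> i = 1 \<or> i = 2 \<or> i = 3 \<or> i = 4 \<or> i = 5 \<or> i = 6"
  by auto

definition ap :: "nat \<Rightarrow> real" where
  "ap i = [0, -94619, -74275, -32109, 11535, 58188, 88416] ! i / 100000"
definition bp :: "nat \<Rightarrow> real" where "bp i = ap i + 2/100000"

lemma struct_p: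
  "\<exists>q. q 0 = -1 \<and> q 7 = 1 \<and> (\<forall>k<7. q k < q (Suc k))
         \<and> (\<forall>i. 1 \<le> i \<and> i \<le> 6 \<longrightarrow> ap i < q i \<and> q i < bp i)
         \<and> (\<forall>c. Df 1 c = 0 \<longrightarrow> (\<exists>i. 1 \<le> i \<and> i \<le> 6 \<and> c = q i))
         \<and> (\<forall>k<7. \<forall>x y. q k \<le> x \<longrightarrow> x \<le> y \<longrightarrow> y \<le> q (Suc k) \<longrightarrow> 1 * (-1)^k * (Pf 1 y - Pf 1 x) \<ge> 0)"
proof (rule struct_gen)
  show "(1::real) = 1 \<or> 1 = -1" by simp
  show "\<forall>i. 1 \<le> i \<and> i \<le> 6 \<longrightarrow> ap i < bp i" by (simp add: bp_def)
  show "\<forall>i. 1 \<le> i \<and> i \<le> 5 \<longrightarrow> bp i < ap (Suc i)"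
    by (auto simp: ap_def bp_def le_Suc_eq numeral_eq_Suc)
  show "-1 < ap 1" "bp 6 < 1" by (simp_all add: ap_def bp_def)
  have "1 * (-1)^(i-1) * Df 1 (ap i) > 0 \<and> 1 * (-1)^i * Df 1 (bp i) > 0" if "i \<in> {1,2,3,4,5,6}" for i
    using that by (auto simp: ap_def bp_def Df_def power_divide)
  then show "\<forall>i. 1 \<le> i \<and> i \<le> 6 \<longrightarrow> 1 * (-1)^(i-1) * Df 1 (ap i) > 0 \<and> 1 * (-1)^i * Df 1 (bp i) > 0"
    using cases6 by blast
qed

lemma main_p:
  "(\<forall>t>0. period_variation (\<lambda>x. Gpm 1 x powr t)
          < 2 * (\<Sum>\<zeta>\<in>{x \<in> {0..<1}. local_max_point (Gpm 1) x}. Gpm 1 \<zeta> powr t))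
   \<and> period_variation (Gpm 1) < 74"
proof -
  obtain q where q0: "q 0 = -1" and q7: "q 7 = 1" and qmono: "\<forall>k<7. q k < q (Suc k)"
    and qab: "\<forall>i. 1 \<le> i \<and> i \<le> 6 \<longrightarrow> ap i < q i \<and> q i < bp i"
    and qroots: "\<forall>c. Df 1 c = 0 \<longrightarrow> (\<exists>i. 1 \<le> i \<and> i \<le> 6 \<and> c = q i)"
    and qmon: "\<forall>k<7. \<forall>x y. q k \<le> x \<longrightarrow> x \<le> y \<longrightarrow> y \<le> q (Suc k) \<longrightarrow> 1 * (-1)^k * (Pf 1 y - Pf 1 x) \<ge> 0"
    using struct_p by blast
  have s: "(1::real) = 1 \<or> (1::real) = -1" by simp
  note L = s q0 q7 qmono qroots qmon
  define M where "M = {0, 2, 4, 6, 8, 10, 12::nat}"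
  have lm: "\<forall>j\<in>M. local_max_point (Gpm 1) (Xp q j)"
    using lmax_int[OF L, of 1] lmax_int[OF L, of 3] lmax_int[OF L, of 5] lmax_0[OF L]
    by (simp add: M_def)
  have M14: "M \<subseteq> {..<14}" by (auto simp: M_def)
  have P: "\<And>k. k \<le> 7 \<Longrightarrow> Pf 1 (q k) \<ge> 0" by (rule Pf_q_nonneg[OF L])
  have R: "\<And>k. k < 7 \<Longrightarrow> (-1)^k * (Pf 1 (q (Suc k)) - Pf 1 (q k)) \<ge> 0"
    using rel[OF L] by simp
  have inc: "Pf 1 (q 0) \<le> Pf 1 (q 1)" "Pf 1 (q 2) \<le> Pf 1 (q 1)" "Pf 1 (q 2) \<le> Pf 1 (q 3)"
     "Pf 1 (q 4) \<le> Pf 1 (q 3)" "Pf 1 (q 4) \<le> Pf 1 (q 5)" "Pf 1 (q 6) \<le> Pf 1 (q 5)"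
     "Pf 1 (q 6) \<le> Pf 1 (q 7)"
    using R[of 0] R[of 1] R[of 2] R[of 3] R[of 4] R[of 5] R[of 6] by (simp_all add: numeral_eq_Suc)
  have XG: "\<And>k. k \<le> 14 \<Longrightarrow> Gpm 1 (Xp q k) = Pf 1 (q (if k \<le> 7 then 7 - k else k - 7))"
    by (rule Xp_G[OF L])
  have base: "period_variation (\<lambda>x. Gpm 1 x powr t) + 2 * (Pf 1 (q 0) powr t)
        + 4 * (Pf 1 (q 2) powr t + Pf 1 (q 4) powr t + Pf 1 (q 6) powr t)
      \<le> 2 * (\<Sum>\<zeta>\<in>{x \<in> {0..<1}. local_max_point (Gpm 1) x}. Gpm 1 \<zeta> powr t)"
    if t: "t \<ge> 0" for t
  proof -
    define p where "p k = Pf 1 (q k) powr t" for k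
    have pm: "\<And>i j. i \<le> 7 \<Longrightarrow> Pf 1 (q i) \<le> Pf 1 (q j) \<Longrightarrow> p i \<le> p j"
      unfolding p_def using P t by (intro powr_mono2) auto
    have ineq: "p 0 \<le> p 1" "p 2 \<le> p 1" "p 2 \<le> p 3" "p 4 \<le> p 3" "p 4 \<le> p 5" "p 6 \<le> p 5" "p 6 \<le> p 7"
      using pm inc by auto
    have V: "period_variation (\<lambda>x. Gpm 1 x powr t) \<le> 2 * (\<bar>p 1 - p 0\<bar> + \<bar>p 2 - p 1\<bar> + \<bar>p 3 - p 2\<bar>
        + \<bar>p 4 - p 3\<bar> + \<bar>p 5 - p 4\<bar> + \<bar>p 6 - p 5\<bar> + \<bar>p 7 - p 6\<bar>)"
      using var_le2[OF L t] sumabs7[of p] unfolding p_def by simp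
    have SM: "(\<Sum>j\<in>M. Gpm 1 (Xp q j) powr t) = p 7 + 2 * (p 1 + p 3 + p 5)"
      by (simp add: M_def XG p_def)
    have "(\<Sum>j\<in>M. Gpm 1 (Xp q j) powr t) \<le> (\<Sum>\<zeta>\<in>{x \<in> {0..<1}. local_max_point (Gpm 1) x}. Gpm 1 \<zeta> powr t)"
      by (rule sumM[OF L M14 lm])
    then show ?thesis using V SM ineq unfolding p_def by simp
  qed
  have part1: "\<forall>t>0. period_variation (\<lambda>x. Gpm 1 x powr t)
          < 2 * (\<Sum>\<zeta>\<in>{x \<in> {0..<1}. local_max_point (Gpm 1) x}. Gpm 1 \<zeta> powr t)"
  proof (intro allI impI)
    fix t :: real assume t: "t > 0"
    have h1: "Pf 1 (q 0) powr t = 1" using q0 by (simp add: Pf_def)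
    have h2: "0 \<le> Pf 1 (q 2) powr t + Pf 1 (q 4) powr t + Pf 1 (q 6) powr t" by simp
    have b: "period_variation (\<lambda>x. Gpm 1 x powr t) + 2 * 1
        + 4 * (Pf 1 (q 2) powr t + Pf 1 (q 4) powr t + Pf 1 (q 6) powr t)
      \<le> 2 * (\<Sum>\<zeta>\<in>{x \<in> {0..<1}. local_max_point (Gpm 1) x}. Gpm 1 \<zeta> powr t)"
      using base[OF less_imp_le[OF t]] unfolding h1 .
    show "period_variation (\<lambda>x. Gpm 1 x powr t)
          < 2 * (\<Sum>\<zeta>\<in>{x \<in> {0..<1}. local_max_point (Gpm 1) x}. Gpm 1 \<zeta> powr t)"
    proof -
      have "period_variation (\<lambda>x. Gpm 1 x powr t) < period_variation (\<lambda>x. Gpm 1 x powr t) + 2 * 1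
        + 4 * (Pf 1 (q 2) powr t + Pf 1 (q 4) powr t + Pf 1 (q 6) powr t)"
      proof -
        have gen: "\<And>(V::real) (a::real) (b::real) (c::real). 0 \<le> a \<Longrightarrow> 0 \<le> b \<Longrightarrow> 0 \<le> c \<Longrightarrow> V < V + 2*1 + 4*(a+b+c)"
          by (simp add: add_pos_nonneg)
        show ?thesis by (rule gen) simp_all
      qed
      also note b
      finally show ?thesis .
    qed
  qed
  have part2: "period_variation (Gpm 1) < 74"
  proof -
    have G1: "(\<lambda>x. Gpm 1 x powr 1) = Gpm 1" using G_nonneg[OF s] by (auto simp: fun_eq_iff)
    have ub: "Pf 1 (q i) \<le> Pf 1 (ap i) + 3208 * (bp i - ap i)" if i: "1 \<le> i" "i \<le> 6" for i
    proof -
      have "-1 \<le> ap i" using cases6[OF i] by (auto simp: ap_def)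
      moreover have "ap i < q i" "q i < bp i" using qab i by auto
      moreover have "q i \<le> 1" using q_range[OF L, of i] i by simp
      ultimately show ?thesis using Pf_lip[OF s, of "ap i" "q i"] by simp
    qed
    have V: "period_variation (Gpm 1) \<le> 2 * (2 * (Pf 1 (q 1) + Pf 1 (q 3) + Pf 1 (q 5)) + Pf 1 (q 7) - Pf 1 (q 0)
               - 2 * (Pf 1 (q 2) + Pf 1 (q 4) + Pf 1 (q 6)))"
    proof -
      have "period_variation (Gpm 1) \<le> 2 * (\<Sum>k<7. \<bar>Pf 1 (q (Suc k)) - Pf 1 (q k)\<bar>)"
        using var_le2[OF L, of 1] G1 P by (simp add: abs_of_nonneg)
      also have "\<dots> = 2 * (\<bar>Pf 1 (q 1) - Pf 1 (q 0)\<bar> + \<bar>Pf 1 (q 2) - Pf 1 (q 1)\<bar> + \<bar>Pf 1 (q 3) - Pf 1 (q 2)\<bar>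
        + \<bar>Pf 1 (q 4) - Pf 1 (q 3)\<bar> + \<bar>Pf 1 (q 5) - Pf 1 (q 4)\<bar> + \<bar>Pf 1 (q 6) - Pf 1 (q 5)\<bar> + \<bar>Pf 1 (q 7) - Pf 1 (q 6)\<bar>)"
        using sumabs7[of "\<lambda>k. Pf 1 (q k)"] by simp
      finally show ?thesis using inc by simp
    qed
    have num: "4 * (Pf 1 (ap 1) + Pf 1 (ap 3) + Pf 1 (ap 5) + 3 * (3208 * (2/100000))) + 16 < 74"
      by (simp add: ap_def Pf_def power_divide)
    have "Pf 1 (q 7) = 9" "Pf 1 (q 0) = 1" using q0 q7 by (simp_all add: Pf_def)
    then show ?thesis using V ub[of 1] ub[of 3] ub[of 5] P[of 2] P[of 4] P[of 6] num by (simp add: bp_def)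
  qed
  show ?thesis using part1 part2 by blast
qed

definition am :: "nat \<Rightarrow> real" where
  "am i = [0, -95698, -71426, -35677, 14596, 56409, 88933] ! i / 100000"
definition bm :: "nat \<Rightarrow> real" where "bm i = am i + 2/100000"

lemma struct_m:
  "\<exists>q. q 0 = -1 \<and> q 7 = 1 \<and> (\<forall>k<7. q k < q (Suc k))
         \<and> (\<forall>i. 1 \<le> i \<and> i \<le> 6 \<longrightarrow> am i < q i \<and> q i < bm i)
         \<and> (\<forall>c. Df (-1) c = 0 \<longrightarrow> (\<exists>i. 1 \<le> i \<and> i \<le> 6 \<and> c = q i))
         \<and> (\<forall>k<7. \<forall>x y. q k \<le> x \<longrightarrow> x \<le> y \<longrightarrow> y \<le> q (Suc k) \<longrightarrow> (-1) * (-1)^k * (Pf (-1) y - Pf (-1) x) \<ge> 0)"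
proof (rule struct_gen)
  show "(-1::real) = 1 \<or> -1 = -1" by simp
  show "\<forall>i. 1 \<le> i \<and> i \<le> 6 \<longrightarrow> am i < bm i" by (simp add: bm_def)
  show "\<forall>i. 1 \<le> i \<and> i \<le> 5 \<longrightarrow> bm i < am (Suc i)"
    by (auto simp: am_def bm_def le_Suc_eq numeral_eq_Suc)
  show "-1 < am 1" "bm 6 < 1" by (simp_all add: am_def bm_def)
  have "(-1) * (-1)^(i-1) * Df (-1) (am i) > 0 \<and> (-1) * (-1)^i * Df (-1) (bm i) > 0" if "i \<in> {1,2,3,4,5,6}" for i
    using that by (auto simp: am_def bm_def Df_def power_divide)
  then show "\<forall>i. 1 \<le> i \<and> i \<le> 6 \<longrightarrow> (-1) * (-1)^(i-1) * Df (-1) (am i) > 0 \<and> (-1) * (-1)^i * Df (-1) (bm i) > 0"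
    using cases6 by blast
qed

lemma main_m:
  "(\<forall>t>0. period_variation (\<lambda>x. Gpm (-1) x powr t)
          < 2 * (\<Sum>\<zeta>\<in>{x \<in> {0..<1}. local_max_point (Gpm (-1)) x}. Gpm (-1) \<zeta> powr t))
   \<and> period_variation (Gpm (-1)) < 74"
proof -
  obtain q where q0: "q 0 = -1" and q7: "q 7 = 1" and qmono: "\<forall>k<7. q k < q (Suc k)"
    and qab: "\<forall>i. 1 \<le> i \<and> i \<le> 6 \<longrightarrow> am i < q i \<and> q i < bm i"
    and qroots: "\<forall>c. Df (-1) c = 0 \<longrightarrow> (\<exists>i. 1 \<le> i \<and> i \<le> 6 \<and> c = q i)"
    and qmon: "\<forall>k<7. \<forall>x y. q k \<le> x \<longrightarrow> x \<le> y \<longrightarrow> y \<le> q (Suc k) \<longrightarrow> (-1) * (-1)^k * (Pf (-1) y - Pf (-1) x) \<ge> 0"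
    using struct_m by blast
  have s: "(-1::real) = 1 \<or> (-1::real) = -1" by simp
  note L = s q0 q7 qmono qroots qmon
  define M where "M = {1, 3, 5, 7, 9, 11, 13::nat}"
  have lm: "\<forall>j\<in>M. local_max_point (Gpm (-1)) (Xp q j)"
    using lmax_int[OF L, of 2] lmax_int[OF L, of 4] lmax_int[OF L, of 6] lmax_7[OF L]
    by (simp add: M_def)
  have M14: "M \<subseteq> {..<14}" by (auto simp: M_def)
  have P: "\<And>k. k \<le> 7 \<Longrightarrow> Pf (-1) (q k) \<ge> 0" by (rule Pf_q_nonneg[OF L])
  have R: "\<And>k. k < 7 \<Longrightarrow> (-1)^k * (Pf (-1) (q k) - Pf (-1) (q (Suc k))) \<ge> 0"
    proof -
    fix k :: nat assume "k < 7"
    then have "(-1) * (-1)^k * (Pf (-1) (q (Suc k)) - Pf (-1) (q k)) \<ge> 0" by (rule rel[OF L])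
    then show "(-1)^k * (Pf (-1) (q k) - Pf (-1) (q (Suc k))) \<ge> 0" by (simp add: algebra_simps)
  qed
  have inc: "Pf (-1) (q 1) \<le> Pf (-1) (q 0)" "Pf (-1) (q 1) \<le> Pf (-1) (q 2)" "Pf (-1) (q 3) \<le> Pf (-1) (q 2)"
     "Pf (-1) (q 3) \<le> Pf (-1) (q 4)" "Pf (-1) (q 5) \<le> Pf (-1) (q 4)" "Pf (-1) (q 5) \<le> Pf (-1) (q 6)"
     "Pf (-1) (q 7) \<le> Pf (-1) (q 6)"
    using R[of 0] R[of 1] R[of 2] R[of 3] R[of 4] R[of 5] R[of 6] by (simp_all add: numeral_eq_Suc)
  have XG: "\<And>k. k \<le> 14 \<Longrightarrow> Gpm (-1) (Xp q k) = Pf (-1) (q (if k \<le> 7 then 7 - k else k - 7))"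
    by (rule Xp_G[OF L])
  have base: "period_variation (\<lambda>x. Gpm (-1) x powr t) + 2 * (Pf (-1) (q 7) powr t)
        + 4 * (Pf (-1) (q 1) powr t + Pf (-1) (q 3) powr t + Pf (-1) (q 5) powr t)
      \<le> 2 * (\<Sum>\<zeta>\<in>{x \<in> {0..<1}. local_max_point (Gpm (-1)) x}. Gpm (-1) \<zeta> powr t)"
    if t: "t \<ge> 0" for t
  proof -
    define p where "p k = Pf (-1) (q k) powr t" for k
    have pm: "\<And>i j. i \<le> 7 \<Longrightarrow> Pf (-1) (q i) \<le> Pf (-1) (q j) \<Longrightarrow> p i \<le> p j"
      unfolding p_def using P t by (intro powr_mono2) auto
    have ineq: "p 1 \<le> p 0" "p 1 \<le> p 2" "p 3 \<le> p 2" "p 3 \<le> p 4" "p 5 \<le> p 4" "p 5 \<le> p 6" "p 7 \<le> p 6"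
      using pm inc by auto
    have V: "period_variation (\<lambda>x. Gpm (-1) x powr t) \<le> 2 * (\<bar>p 1 - p 0\<bar> + \<bar>p 2 - p 1\<bar> + \<bar>p 3 - p 2\<bar>
        + \<bar>p 4 - p 3\<bar> + \<bar>p 5 - p 4\<bar> + \<bar>p 6 - p 5\<bar> + \<bar>p 7 - p 6\<bar>)"
      using var_le2[OF L t] sumabs7[of p] unfolding p_def by simp
    have SM: "(\<Sum>j\<in>M. Gpm (-1) (Xp q j) powr t) = p 0 + 2 * (p 2 + p 4 + p 6)"
      by (simp add: M_def XG p_def)
    have "(\<Sum>j\<in>M. Gpm (-1) (Xp q j) powr t) \<le> (\<Sum>\<zeta>\<in>{x \<in> {0..<1}. local_max_point (Gpm (-1)) x}. Gpm (-1) \<zeta> powr t)"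
      by (rule sumM[OF L M14 lm])
    then show ?thesis using V SM ineq unfolding p_def by simp
  qed
  have part1: "\<forall>t>0. period_variation (\<lambda>x. Gpm (-1) x powr t)
          < 2 * (\<Sum>\<zeta>\<in>{x \<in> {0..<1}. local_max_point (Gpm (-1)) x}. Gpm (-1) \<zeta> powr t)"
  proof (intro allI impI)
    fix t :: real assume t: "t > 0"
    have h1: "Pf (-1) (q 7) powr t = 1" using q7 by (simp add: Pf_def)
    have h2: "0 \<le> Pf (-1) (q 1) powr t + Pf (-1) (q 3) powr t + Pf (-1) (q 5) powr t" by simp
    have b: "period_variation (\<lambda>x. Gpm (-1) x powr t) + 2 * 1
        + 4 * (Pf (-1) (q 1) powr t + Pf (-1) (q 3) powr t + Pf (-1) (q 5) powr t)
      \<le> 2 * (\<Sum>\<zeta>\<in>{x \<in> {0..<1}. local_max_point (Gpm (-1)) x}. Gpm (-1) \<zeta> powr t)"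
      using base[OF less_imp_le[OF t]] unfolding h1 .
    show "period_variation (\<lambda>x. Gpm (-1) x powr t)
          < 2 * (\<Sum>\<zeta>\<in>{x \<in> {0..<1}. local_max_point (Gpm (-1)) x}. Gpm (-1) \<zeta> powr t)"
    proof -
      have "period_variation (\<lambda>x. Gpm (-1) x powr t) < period_variation (\<lambda>x. Gpm (-1) x powr t) + 2 * 1
        + 4 * (Pf (-1) (q 1) powr t + Pf (-1) (q 3) powr t + Pf (-1) (q 5) powr t)"
      proof -
        have gen: "\<And>(V::real) (a::real) (b::real) (c::real). 0 \<le> a \<Longrightarrow> 0 \<le> b \<Longrightarrow> 0 \<le> c \<Longrightarrow> V < V + 2*1 + 4*(a+b+c)"
          by (simp add: add_pos_nonneg)
        show ?thesis by (rule gen) simp_all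
      qed
      also note b
      finally show ?thesis .
    qed
  qed
  have part2: "period_variation (Gpm (-1)) < 74"
  proof -
    have G1: "(\<lambda>x. Gpm (-1) x powr 1) = Gpm (-1)" using G_nonneg[OF s] by (auto simp: fun_eq_iff)
    have ub: "Pf (-1) (q i) \<le> Pf (-1) (am i) + 3208 * (bm i - am i)" if i: "1 \<le> i" "i \<le> 6" for i
    proof -
      have "-1 \<le> am i" using cases6[OF i] by (auto simp: am_def)
      moreover have "am i < q i" "q i < bm i" using qab i by auto
      moreover have "q i \<le> 1" using q_range[OF L, of i] i by simp
      ultimately show ?thesis using Pf_lip[OF s, of "am i" "q i"] by simp
    qed
    have V: "period_variation (Gpm (-1)) \<le> 2 * (2 * (Pf (-1) (q 2) + Pf (-1) (q 4) + Pf (-1) (q 6)) + Pf (-1) (q 0) - Pf (-1) (q 7)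
               - 2 * (Pf (-1) (q 1) + Pf (-1) (q 3) + Pf (-1) (q 5)))"
    proof -
      have "period_variation (Gpm (-1)) \<le> 2 * (\<Sum>k<7. \<bar>Pf (-1) (q (Suc k)) - Pf (-1) (q k)\<bar>)"
        using var_le2[OF L, of 1] G1 P by (simp add: abs_of_nonneg)
      also have "\<dots> = 2 * (\<bar>Pf (-1) (q 1) - Pf (-1) (q 0)\<bar> + \<bar>Pf (-1) (q 2) - Pf (-1) (q 1)\<bar> + \<bar>Pf (-1) (q 3) - Pf (-1) (q 2)\<bar>
        + \<bar>Pf (-1) (q 4) - Pf (-1) (q 3)\<bar> + \<bar>Pf (-1) (q 5) - Pf (-1) (q 4)\<bar> + \<bar>Pf (-1) (q 6) - Pf (-1) (q 5)\<bar> + \<bar>Pf (-1) (q 7) - Pf (-1) (q 6)\<bar>)"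
        using sumabs7[of "\<lambda>k. Pf (-1) (q k)"] by simp
      finally show ?thesis using inc by simp
    qed
    have num: "4 * (Pf (-1) (am 2) + Pf (-1) (am 4) + Pf (-1) (am 6) + 3 * (3208 * (2/100000))) < 74"
      by (simp add: am_def Pf_def power_divide)
    have "Pf (-1) (q 7) = 1" "Pf (-1) (q 0) = 1" using q0 q7 by (simp_all add: Pf_def)
    then show ?thesis using V ub[of 2] ub[of 4] ub[of 6] P[of 1] P[of 3] P[of 5] num by (simp add: bm_def)
  qed
  show ?thesis using part1 part2 by blast
qed


theorem corollary2:
  fixes s :: real
  assumes "s = 1 \<or> s = -1"
  defines "Z \<equiv> {x \<in> {0..<1}. local_max_point (Gpm s) x}"
  shows "(\<forall>t>0. period_variation (\<lambda>x. Gpm s x powr t)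
                  < 2 * (\<Sum>\<zeta>\<in>Z. Gpm s \<zeta> powr t))
         \<and> period_variation (Gpm s) < 74"
proof -
  from assms(1) show ?thesis
  proof
    assume "s = 1" then show ?thesis unfolding Z_def using main_p by simp
  next
    assume "s = -1" then show ?thesis unfolding Z_def using main_m by simp
  qed
qed

end
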